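(* Let $n,m\ge1$ be integers (not necessarily distinct). Then \[ \mathcal{R}_{\mathcal{BOOL}}(n,m)=\mathcal{R}_{\mathcal{IDM}}(n,m)=\mathcal{R}_{\mathcal{PO}}(n,m)=(n-1)(m-1)+1 . \]
   Context: For a commutative ring $R$ (with $1\ne0$), the idempotents graph $\mathrm{Idm}(R)$ is the simple undirected graph whose vertices are the idempotents of $R$, distinct $a,b$ adjacent iff $a\mid b$ or $b\mid a$. $\mathcal{IDM}$ is the class of all idempotents graphs of commutative rings, and $\mathcal{BOOL}\subseteq\mathcal{IDM}$ the class of idempotents graphs of Boolean rings. $\mathcal{PO}$ is the class of partial order graphs $G_A$ of posets $(A,\le)$ (distinct vertices adjacent iff comparable). For a class $\mathcal{C}$ of graphs, $\mathcal{R}_{\mathcal{C}}(n,m)$ is the minimal $r$ such that every induced subgraph with $r$ vertices of any graph in $\mathcal{C}$ contains either $K_n$ or an independent set of $m$ vertices. *)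

theory Defs
  imports Main "HOL-Algebra.Ring" "HOL-Algebra.Divisibility"
begin

definition is_clique :: "('v \<Rightarrow> 'v \<Rightarrow> bool) \<Rightarrow> 'v set \<Rightarrow> bool" where
  "is_clique E K \<longleftrightarrow> (\<forall>x\<in>K. \<forall>y\<in>K. x \<noteq> y \<longrightarrow> E x y)"

definition is_indep :: "('v \<Rightarrow> 'v \<Rightarrow> bool) \<Rightarrow> 'v set \<Rightarrow> bool" where
  "is_indep E I \<longleftrightarrow> (\<forall>x\<in>I. \<forall>y\<in>I. x \<noteq> y \<longrightarrow> \<not> E x y)"

definition ramsey_prop :: "'v set \<Rightarrow> ('v \<Rightarrow> 'v \<Rightarrow> bool) \<Rightarrow> nat \<Rightarrow> nat \<Rightarrow> nat \<Rightarrow> bool" where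
  "ramsey_prop V E n m r \<longleftrightarrow>
     (\<forall>S. S \<subseteq> V \<and> finite S \<and> card S = r \<longrightarrow>
        (\<exists>K\<subseteq>S. card K = n \<and> is_clique E K) \<or> (\<exists>I\<subseteq>S. card I = m \<and> is_indep E I))"

definition nontriv_cring :: "('a, 'b) ring_scheme \<Rightarrow> bool" where
  "nontriv_cring R \<longleftrightarrow> cring R \<and> \<one>\<^bsub>R\<^esub> \<noteq> \<zero>\<^bsub>R\<^esub>"

definition boolean_ring :: "('a, 'b) ring_scheme \<Rightarrow> bool" where
  "boolean_ring R \<longleftrightarrow> nontriv_cring R \<and> (\<forall>x\<in>carrier R. x \<otimes>\<^bsub>R\<^esub> x = x)"

definition idm_verts :: "('a, 'b) ring_scheme \<Rightarrow> 'a set" where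
  "idm_verts R = {a \<in> carrier R. a \<otimes>\<^bsub>R\<^esub> a = a}"

definition idm_adj :: "('a, 'b) ring_scheme \<Rightarrow> 'a \<Rightarrow> 'a \<Rightarrow> bool" where
  "idm_adj R a b \<longleftrightarrow> a \<noteq> b \<and> (a divides\<^bsub>R\<^esub> b \<or> b divides\<^bsub>R\<^esub> a)"

definition po_adj :: "'a rel \<Rightarrow> 'a \<Rightarrow> 'a \<Rightarrow> bool" where
  "po_adj ord_rel a b \<longleftrightarrow> a \<noteq> b \<and> ((a, b) \<in> ord_rel \<or> (b, a) \<in> ord_rel)"

end

theory Submission
  imports Defs
begin

lemma mirsky:
  fixes S :: "'a set" and le :: "'a \<Rightarrow> 'a \<Rightarrow> bool" and E
  assumes fin: "finite S" and cardS: "card S = (n-1)*(m-1)+1" and n1: "n \<ge> 1" and m1: "m \<ge> 1"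
  and rf: "\<And>x. x\<in>S \<Longrightarrow> le x x"
  and anti: "\<And>x y. x\<in>S \<Longrightarrow> y\<in>S \<Longrightarrow> le x y \<Longrightarrow> le y x \<Longrightarrow> x = y"
  and tr: "\<And>x y z. x\<in>S \<Longrightarrow> y\<in>S \<Longrightarrow> z\<in>S \<Longrightarrow> le x y \<Longrightarrow> le y z \<Longrightarrow> le x z"
  and E: "\<And>x y. x\<in>S \<Longrightarrow> y\<in>S \<Longrightarrow> E x y \<longleftrightarrow> x\<noteq>y \<and> (le x y \<or> le y x)"
  shows "(\<exists>K\<subseteq>S. card K = n \<and> is_clique E K) \<or> (\<exists>I\<subseteq>S. card I = m \<and> is_indep E I)"
proof -
  define ch where "ch x = {C. C \<subseteq> S \<and> x \<in> C \<and> (\<forall>a\<in>C. \<forall>b\<in>C. le a b \<or> le b a) \<and> (\<forall>c\<in>C. le c x)}" for x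
  define h where "h x = Max (card ` ch x)" for x
  have chfin: "finite (ch x)" for x
    by (rule finite_subset[of _ "Pow S"]) (auto simp: ch_def fin)
  have chne: "{x} \<in> ch x" if "x \<in> S" for x
    using that rf by (auto simp: ch_def)
  have hge: "card C \<le> h x" if "x\<in>S" "C \<in> ch x" for x C
    unfolding h_def using chfin that by (intro Max_ge) auto
  have hex: "\<exists>C\<in>ch x. card C = h x" if "x\<in>S" for x
  proof -
    have "h x \<in> card ` ch x" unfolding h_def using chfin chne[OF that] by (intro Max_in) auto
    then show ?thesis by auto
  qed
  have h1: "1 \<le> h x" if "x \<in> S" for x
    using hge[OF that chne[OF that]] by simp
  have key: "h x < h y" if xy: "x\<in>S" "y\<in>S" "x\<noteq>y" "le x y" for x y
  proof -
    obtain C where C: "C \<in> ch x" "card C = h x" using hex[OF xy(1)] by blast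
    have CS: "C \<subseteq> S" using C by (auto simp: ch_def)
    have ynC: "y \<notin> C"
    proof
      assume "y \<in> C"
      then have "le y x" using C by (auto simp: ch_def)
      then show False using anti xy by blast
    qed
    have "insert y C \<in> ch y"
      using C xy CS unfolding ch_def
      by (auto intro: tr rf)
    then have "card (insert y C) \<le> h y" using hge xy by blast
    moreover have "card (insert y C) = h x + 1"
      using ynC C CS fin by (simp add: finite_subset)
    ultimately show ?thesis by simp
  qed
  show ?thesis
  proof (cases "\<exists>x\<in>S. h x \<ge> n")
    case True
    then obtain x where x: "x\<in>S" "h x \<ge> n" by blast
    obtain C where C: "C \<in> ch x" "card C = h x" using hex[OF x(1)] by blast
    obtain K where K: "K \<subseteq> C" "card K = n" using C x by (metis obtain_subset_with_card_n)
    have "K \<subseteq> S" using K C by (auto simp: ch_def)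
    moreover have "is_clique E K"
      unfolding is_clique_def using K C E \<open>K \<subseteq> S\<close> by (auto simp: ch_def) blast+
    ultimately show ?thesis using K by blast
  next
    case False
    then have hlt: "h x \<in> {1..n-1}" if "x \<in> S" for x using h1[OF that] that by force
    have "\<exists>k\<in>{1..n-1}. card {x\<in>S. h x = k} \<ge> m"
    proof (rule ccontr)
      assume "\<not> ?thesis"
      then have le: "card {x\<in>S. h x = k} \<le> m - 1" if "k \<in> {1..n-1}" for k using that by force
      have "S = (\<Union>k\<in>{1..n-1}. {x\<in>S. h x = k})" using hlt by auto
      then have "card S \<le> (\<Sum>k\<in>{1..n-1}. card {x\<in>S. h x = k})"
        by (metis card_UN_le finite_atLeastAtMost)
      also have "\<dots> \<le> (\<Sum>k\<in>{1..n-1}. m - 1)" by (rule sum_mono) (use le in auto)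
      also have "\<dots> = (n-1)*(m-1)" by simp
      finally show False using cardS by simp
    qed
    then obtain k where k: "card {x\<in>S. h x = k} \<ge> m" by blast
    obtain I where I: "I \<subseteq> {x\<in>S. h x = k}" "card I = m" using k by (metis obtain_subset_with_card_n)
    have "is_indep E I"
      unfolding is_indep_def
    proof (intro ballI impI notI)
      fix x y assume "x \<in> I" "y \<in> I" "x \<noteq> y" "E x y"
      then show False using I E key by (metis (mono_tags, lifting) mem_Collect_eq less_irrefl subsetD)
    qed
    then show ?thesis using I by blast
  qed
qed

lemma lower:
  assumes TV: "T \<subseteq> V" and finT: "finite T" and r: "r \<le> card T" and n1: "n \<ge> 1" and m1: "m \<ge> 1"
    and blk: "\<And>x. x\<in>T \<Longrightarrow> blk x < m-1"
    and fib: "\<And>i. card {x\<in>T. blk x = i} \<le> n-1"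
    and E: "\<And>x y. x\<in>T \<Longrightarrow> y\<in>T \<Longrightarrow> x\<noteq>y \<Longrightarrow> E x y \<longleftrightarrow> blk x = blk y"
  shows "\<not> ramsey_prop V E n m r"
proof
  assume R: "ramsey_prop V E n m r"
  obtain S where S: "S \<subseteq> T" "card S = r" "finite S" using r by (metis obtain_subset_with_card_n)
  have "(\<exists>K\<subseteq>S. card K = n \<and> is_clique E K) \<or> (\<exists>I\<subseteq>S. card I = m \<and> is_indep E I)"
    using R S TV unfolding ramsey_prop_def by blast
  then show False
  proof
    assume "\<exists>K\<subseteq>S. card K = n \<and> is_clique E K"
    then obtain K where K: "K \<subseteq> S" "card K = n" "is_clique E K" by blast
    then obtain x0 where x0: "x0 \<in> K" using n1 by fastforce
    have "K \<subseteq> {x\<in>T. blk x = blk x0}"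
    proof
      fix y assume y: "y \<in> K"
      have yT: "y \<in> T" and x0T: "x0 \<in> T" using y x0 K S by auto
      have "blk y = blk x0"
      proof (cases "y = x0")
        case False
        then have "E y x0" using K(3) y x0 unfolding is_clique_def by blast
        then show ?thesis using E[OF yT x0T False] by simp
      qed simp
      then show "y \<in> {x\<in>T. blk x = blk x0}" using yT by simp
    qed
    then have "card K \<le> card {x\<in>T. blk x = blk x0}" using finT by (intro card_mono) auto
    then show False using fib[of "blk x0"] K n1 by simp
  next
    assume "\<exists>I\<subseteq>S. card I = m \<and> is_indep E I"
    then obtain I where I: "I \<subseteq> S" "card I = m" "is_indep E I" by blast
    have "inj_on blk I"
    proof (rule inj_onI, rule ccontr)
      fix x y assume xy: "x \<in> I" "y \<in> I" "blk x = blk y" "x \<noteq> y"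
      have "x \<in> T" "y \<in> T" using xy I S by auto
      then have "E x y" using E xy by blast
      then show False using I(3) xy unfolding is_indep_def by blast
    qed
    then have "card I = card (blk ` I)" by (simp add: card_image)
    also have "\<dots> \<le> card {..<m-1}" using I S blk by (intro card_mono) auto
    finally show False using I m1 by simp
  qed
qed

definition BR :: "nat set ring" where
  "BR = \<lparr>carrier = UNIV, monoid.mult = (\<inter>), one = UNIV, zero = {}, add = (\<lambda>a b. (a - b) \<union> (b - a))\<rparr>"

lemma BR_cring: "cring BR"
proof (rule cringI)
  show "abelian_group BR"
  proof (rule abelian_groupI)
    fix x :: "nat set" assume "x \<in> carrier BR"
    show "\<exists>y\<in>carrier BR. y \<oplus>\<^bsub>BR\<^esub> x = \<zero>\<^bsub>BR\<^esub>"
      by (rule bexI[of _ x]) (simp_all add: BR_def)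
  next
    fix x y z :: "nat set"
    show "(x \<oplus>\<^bsub>BR\<^esub> y) \<oplus>\<^bsub>BR\<^esub> z = x \<oplus>\<^bsub>BR\<^esub> (y \<oplus>\<^bsub>BR\<^esub> z)"
      by (simp add: BR_def) blast
  qed (auto simp: BR_def)
  show "comm_monoid BR"
    by (rule comm_monoidI) (auto simp: BR_def)
next
  fix x y z :: "nat set"
  show "(x \<oplus>\<^bsub>BR\<^esub> y) \<otimes>\<^bsub>BR\<^esub> z = x \<otimes>\<^bsub>BR\<^esub> z \<oplus>\<^bsub>BR\<^esub> y \<otimes>\<^bsub>BR\<^esub> z"
    by (simp add: BR_def) blast
qed

lemma BR_bool: "boolean_ring BR"
  using BR_cring by (auto simp: boolean_ring_def nontriv_cring_def BR_def)

lemma BR_divides: "a divides\<^bsub>BR\<^esub> b \<longleftrightarrow> b \<subseteq> a"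
  unfolding factor_def by (auto simp: BR_def)

lemma BR_verts: "idm_verts BR = UNIV"
  by (auto simp: idm_verts_def BR_def)

definition TT :: "nat \<Rightarrow> nat \<Rightarrow> nat set" where
  "TT n m = {k. k div n < m-1 \<and> k mod n < n-1}"

lemma TT_eq:
  assumes "n \<ge> 1" shows "TT n m = (\<lambda>(i,j). i*n+j) ` ({..<m-1} \<times> {..<n-1})"
proof (rule Set.set_eqI)
  fix k
  show "k \<in> TT n m \<longleftrightarrow> k \<in> (\<lambda>(i,j). i*n+j) ` ({..<m-1} \<times> {..<n-1})"
  proof
    assume "k \<in> TT n m"
    then show "k \<in> (\<lambda>(i,j). i*n+j) ` ({..<m-1} \<times> {..<n-1})"
      unfolding TT_def by (intro image_eqI[of _ _ "(k div n, k mod n)"]) auto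
  next
    assume "k \<in> (\<lambda>(i,j). i*n+j) ` ({..<m-1} \<times> {..<n-1})"
    then obtain i j where "k = i*n+j" "i < m-1" "j < n-1" by auto
    then show "k \<in> TT n m" using assms by (simp add: TT_def)
  qed
qed

lemma TT_inj:
  fixes n m :: nat
  assumes "n \<ge> 1" shows "inj_on (\<lambda>(i,j). i*n+j) ({..<m-1} \<times> {..<n-1})"
proof (rule inj_onI)
  fix p q assume p: "p \<in> {..<m-1} \<times> {..<n-1}" and q: "q \<in> {..<m-1} \<times> {..<n-1}"
    and e: "(\<lambda>(i,j). i*n+j) p = (\<lambda>(i,j). i*n+j) q"
  obtain a b c d where pq: "p = (a,b)" "q = (c,d)" by fastforce
  have "b < n-1" "d < n-1" using p q pq by auto
  then have bd: "b < n" "d < n" by (meson diff_le_self order_less_le_trans)+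
  have e2: "a*n+b = c*n+d" using e pq by simp
  then have "(a*n+b) div n = (c*n+d) div n" "(a*n+b) mod n = (c*n+d) mod n" by simp_all
  then show "p = q" using bd pq by simp
qed

lemma TT_card:
  assumes "n \<ge> 1" shows "card (TT n m) = (n-1)*(m-1)"
  unfolding TT_eq[OF assms] using TT_inj[OF assms] by (simp add: card_image card_cartesian_product)

lemma TT_fin: "n \<ge> 1 \<Longrightarrow> finite (TT n m)"
  unfolding TT_eq by simp
lemma TT_fib:
  assumes "n \<ge> 1" shows "card {x\<in>TT n m. x div n = i} \<le> n-1"
proof -
  have "{x\<in>TT n m. x div n = i} \<subseteq> (\<lambda>j. i*n+j) ` {..<n-1}"
  proof
    fix x assume "x \<in> {x\<in>TT n m. x div n = i}"
    then show "x \<in> (\<lambda>j. i*n+j) ` {..<n-1}"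
      unfolding TT_def by (intro image_eqI[of _ _ "x mod n"]) auto
  qed
  then have "card {x\<in>TT n m. x div n = i} \<le> card ((\<lambda>j. i*n+j) ` {..<n-1})"
    by (intro card_mono) auto
  also have "\<dots> \<le> n-1" using card_image_le[of "{..<n-1}" "\<lambda>j. i*n+j"] by simp
  finally show ?thesis .
qed


definition gg :: "nat \<Rightarrow> nat \<Rightarrow> nat set" where
  "gg n k = {k div n * n .. k}"

lemma gg_mem: "k \<in> gg n k"
  by (simp add: gg_def)

lemma gg_max: "Max (gg n k) = k"
  by (rule Max_eqI) (auto simp: gg_def)

lemma gg_cmp:
  fixes n :: nat assumes "n \<ge> 1"
  shows "(gg n k \<subseteq> gg n l \<or> gg n l \<subseteq> gg n k) \<longleftrightarrow> k div n = l div n"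
proof
  have one: "k div n = l div n" if "gg n k \<subseteq> gg n l" for k l
  proof -
    have "k \<in> gg n l" using that gg_mem by blast
    then have h: "l div n * n \<le> k" "k \<le> l" by (auto simp: gg_def)
    have "(l div n * n) div n \<le> k div n" using h(1) by (rule div_le_mono)
    then have "l div n \<le> k div n" using assms by simp
    moreover have "k div n \<le> l div n" using h(2) by (rule div_le_mono)
    ultimately show ?thesis by simp
  qed
  show "gg n k \<subseteq> gg n l \<or> gg n l \<subseteq> gg n k \<Longrightarrow> k div n = l div n"
    using one[of k l] one[of l k] by auto
next
  assume "k div n = l div n"
  then show "gg n k \<subseteq> gg n l \<or> gg n l \<subseteq> gg n k"
    unfolding gg_def by (cases "k \<le> l") auto
qed

lemma ring_lower:
  fixes n m :: nat
  assumes n1: "n \<ge> 1" and m1: "m \<ge> 1" and r: "r \<le> (n-1)*(m-1)"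
  shows "\<not> ramsey_prop (idm_verts BR) (idm_adj BR) n m r"
proof (rule lower[where T = "gg n ` TT n m" and blk = "\<lambda>s. Max s div n"])
  have inj: "inj_on (gg n) (TT n m)"
    by (rule inj_onI) (metis gg_max)
  show "gg n ` TT n m \<subseteq> idm_verts BR" by (simp add: BR_verts)
  show "finite (gg n ` TT n m)" using TT_fin[OF n1] by simp
  show "r \<le> card (gg n ` TT n m)" using inj r TT_card[OF n1] by (simp add: card_image)
  show "n \<ge> 1" "m \<ge> 1" by fact+
  show "Max x div n < m - 1" if "x \<in> gg n ` TT n m" for x
    using that by (auto simp: gg_max TT_def)
  show "card {x \<in> gg n ` TT n m. Max x div n = i} \<le> n - 1" for i
  proof -
    have "{x \<in> gg n ` TT n m. Max x div n = i} \<subseteq> gg n ` {k\<in>TT n m. k div n = i}"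
      by (auto simp: gg_max)
    then have "card {x \<in> gg n ` TT n m. Max x div n = i} \<le> card (gg n ` {k\<in>TT n m. k div n = i})"
      using TT_fin[OF n1] by (intro card_mono) auto
    also have "\<dots> \<le> card {k\<in>TT n m. k div n = i}" by (rule card_image_le) (use TT_fin[OF n1] in auto)
    also have "\<dots> \<le> n - 1" by (rule TT_fib[OF n1])
    finally show ?thesis .
  qed
  show "idm_adj BR x y \<longleftrightarrow> Max x div n = Max y div n"
    if xin: "x \<in> gg n ` TT n m" "y \<in> gg n ` TT n m" and xy: "x \<noteq> y" for x y
  proof -
    obtain k l where kl: "x = gg n k" "y = gg n l" using xin by blast
    show ?thesis using xy gg_cmp[OF n1, of k l]
      unfolding idm_adj_def BR_divides kl gg_max by blast
  qed
qed

definition ordn :: "nat \<Rightarrow> nat rel" where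
  "ordn n = {(x,y). x div n = y div n \<and> x \<le> y}"

lemma ordn_po: "partial_order_on UNIV (ordn n)"
  unfolding partial_order_on_def preorder_on_def refl_on_def trans_def antisym_def ordn_def
  by auto

lemma po_lower:
  fixes n m :: nat
  assumes n1: "n \<ge> 1" and m1: "m \<ge> 1" and r: "r \<le> (n-1)*(m-1)"
  shows "\<not> ramsey_prop UNIV (po_adj (ordn n)) n m r"
proof (rule lower[where T = "TT n m" and blk = "\<lambda>k. k div n"])
  show "TT n m \<subseteq> UNIV" by simp
  show "finite (TT n m)" using TT_fin[OF n1] .
  show "r \<le> card (TT n m)" using r TT_card[OF n1] by simp
  show "n \<ge> 1" "m \<ge> 1" by fact+
  show "x div n < m - 1" if "x \<in> TT n m" for x using that by (auto simp: TT_def)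
  show "card {x \<in> TT n m. x div n = i} \<le> n - 1" for i by (rule TT_fib[OF n1])
  show "po_adj (ordn n) x y \<longleftrightarrow> x div n = y div n" if "x \<noteq> y" for x y
    using that unfolding po_adj_def ordn_def by auto
qed

lemma idm_anti:
  assumes R: "cring R" and a: "a \<in> idm_verts R" and b: "b \<in> idm_verts R"
    and ab: "a divides\<^bsub>R\<^esub> b" and ba: "b divides\<^bsub>R\<^esub> a"
  shows "a = b"
proof -
  interpret cring R by (rule R)
  have ac: "a \<in> carrier R" "a \<otimes>\<^bsub>R\<^esub> a = a" using a by (auto simp: idm_verts_def)
  have bc: "b \<in> carrier R" "b \<otimes>\<^bsub>R\<^esub> b = b" using b by (auto simp: idm_verts_def)
  from ab obtain c where c: "b = a \<otimes>\<^bsub>R\<^esub> c" "c \<in> carrier R" by (rule dividesE)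
  from ba obtain d where d: "a = b \<otimes>\<^bsub>R\<^esub> d" "d \<in> carrier R" by (rule dividesE)
  have 1: "a \<otimes>\<^bsub>R\<^esub> b = b" using c ac by (metis m_assoc)
  have 2: "b \<otimes>\<^bsub>R\<^esub> a = a" using d bc by (metis m_assoc)
  show ?thesis using 1 2 m_comm ac bc by metis
qed

lemma idm_upper:
  fixes n m :: nat
  assumes R: "nontriv_cring R" and n1: "n \<ge> 1" and m1: "m \<ge> 1"
  shows "ramsey_prop (idm_verts R) (idm_adj R) n m ((n-1)*(m-1)+1)"
  unfolding ramsey_prop_def
proof (intro allI impI, elim conjE)
  fix S assume S: "S \<subseteq> idm_verts R" "finite S" "card S = (n-1)*(m-1)+1"
  have cr: "cring R" using R by (simp add: nontriv_cring_def)
  interpret cring R by (rule cr)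
  have car: "x \<in> carrier R" if "x \<in> S" for x using that S by (auto simp: idm_verts_def)
  show "(\<exists>K\<subseteq>S. card K = n \<and> is_clique (idm_adj R) K) \<or> (\<exists>I\<subseteq>S. card I = m \<and> is_indep (idm_adj R) I)"
  proof (rule mirsky[where le = "\<lambda>a b. a divides\<^bsub>R\<^esub> b"])
    show "finite S" "card S = (n-1)*(m-1)+1" "n \<ge> 1" "m \<ge> 1" by fact+
    show "x divides\<^bsub>R\<^esub> x" if "x \<in> S" for x using car[OF that] by simp
    show "x = y" if "x \<in> S" "y \<in> S" "x divides\<^bsub>R\<^esub> y" "y divides\<^bsub>R\<^esub> x" for x y
      using idm_anti[OF cr] that S by blast
    show "x divides\<^bsub>R\<^esub> z" if "x \<in> S" "y \<in> S" "z \<in> S" "x divides\<^bsub>R\<^esub> y" "y divides\<^bsub>R\<^esub> z" for x y z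
      using divides_trans that car by blast
    show "idm_adj R x y \<longleftrightarrow> x \<noteq> y \<and> (x divides\<^bsub>R\<^esub> y \<or> y divides\<^bsub>R\<^esub> x)" for x y
      by (simp add: idm_adj_def)
  qed
qed

lemma po_upper:
  fixes n m :: nat
  assumes P: "partial_order_on A r" and n1: "n \<ge> 1" and m1: "m \<ge> 1"
  shows "ramsey_prop A (po_adj r) n m ((n-1)*(m-1)+1)"
  unfolding ramsey_prop_def
proof (intro allI impI, elim conjE)
  fix S assume S: "S \<subseteq> A" "finite S" "card S = (n-1)*(m-1)+1"
  have rf: "(x,x) \<in> r" if "x \<in> A" for x using P that by (auto simp: partial_order_on_def preorder_on_def refl_on_def)
  have tr: "trans r" and an: "antisym r" using P by (auto simp: partial_order_on_def preorder_on_def)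
  show "(\<exists>K\<subseteq>S. card K = n \<and> is_clique (po_adj r) K) \<or> (\<exists>I\<subseteq>S. card I = m \<and> is_indep (po_adj r) I)"
  proof (rule mirsky[where le = "\<lambda>a b. (a,b) \<in> r"])
    show "finite S" "card S = (n-1)*(m-1)+1" "n \<ge> 1" "m \<ge> 1" by fact+
    show "(x,x) \<in> r" if "x \<in> S" for x using rf that S by blast
    show "x = y" if "x \<in> S" "y \<in> S" "(x,y) \<in> r" "(y,x) \<in> r" for x y
      using an that by (auto simp: antisym_def)
    show "(x,z) \<in> r" if "x \<in> S" "y \<in> S" "z \<in> S" "(x,y) \<in> r" "(y,z) \<in> r" for x y z
      using tr that by (auto simp: trans_def)
    show "po_adj r x y \<longleftrightarrow> x \<noteq> y \<and> ((x,y) \<in> r \<or> (y,x) \<in> r)" for x y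
      by (simp add: po_adj_def)
  qed
qed

theorem theorem3p23:
  fixes n m :: nat
  assumes "n \<ge> 1" and "m \<ge> 1"
  shows
   "(\<forall>R :: ('a, 'b) ring_scheme. boolean_ring R \<longrightarrow>
        ramsey_prop (idm_verts R) (idm_adj R) n m ((n - 1) * (m - 1) + 1))
    \<and> (\<forall>r < (n - 1) * (m - 1) + 1. \<exists>R :: nat set ring. boolean_ring R \<and>
        \<not> ramsey_prop (idm_verts R) (idm_adj R) n m r)
    \<and> (\<forall>R :: ('c, 'd) ring_scheme. nontriv_cring R \<longrightarrow>
        ramsey_prop (idm_verts R) (idm_adj R) n m ((n - 1) * (m - 1) + 1))
    \<and> (\<forall>r < (n - 1) * (m - 1) + 1. \<exists>R :: nat set ring. nontriv_cring R \<and>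
        \<not> ramsey_prop (idm_verts R) (idm_adj R) n m r)
    \<and> (\<forall>(A :: 'e set) ord_rel. partial_order_on A ord_rel \<longrightarrow>
        ramsey_prop A (po_adj ord_rel) n m ((n - 1) * (m - 1) + 1))
    \<and> (\<forall>r < (n - 1) * (m - 1) + 1. \<exists>(A :: nat set) ord_rel. partial_order_on A ord_rel \<and>
        \<not> ramsey_prop A (po_adj ord_rel) n m r)"
proof (intro conjI allI impI)
  show "ramsey_prop (idm_verts R) (idm_adj R) n m ((n - 1) * (m - 1) + 1)"
    if "boolean_ring R" for R :: "('a, 'b) ring_scheme"
    using idm_upper[of R n m] that assms by (simp add: boolean_ring_def)
  show "ramsey_prop (idm_verts R) (idm_adj R) n m ((n - 1) * (m - 1) + 1)"
    if "nontriv_cring R" for R :: "('c, 'd) ring_scheme"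
    using idm_upper[of R n m] that assms by simp
  show "ramsey_prop A (po_adj r) n m ((n - 1) * (m - 1) + 1)"
    if "partial_order_on A r" for A :: "'e set" and r
    using po_upper[of A r n m] that assms by simp
  fix r assume r: "r < (n - 1) * (m - 1) + 1"
  then have r': "r \<le> (n-1)*(m-1)" by simp
  show "\<exists>R :: nat set ring. boolean_ring R \<and> \<not> ramsey_prop (idm_verts R) (idm_adj R) n m r"
    using BR_bool ring_lower[OF assms r'] by blast
  show "\<exists>R :: nat set ring. nontriv_cring R \<and> \<not> ramsey_prop (idm_verts R) (idm_adj R) n m r"
    using BR_bool ring_lower[OF assms r'] by (auto simp: boolean_ring_def)
  show "\<exists>(A :: nat set) ord_rel. partial_order_on A ord_rel \<and> \<not> ramsey_prop A (po_adj ord_rel) n m r"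
    using ordn_po po_lower[OF assms r'] by blast
qed

end
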